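(* Let $\mathcal{G}=(\mathcal{V},\mathcal{E})$ be an undirected graph with $n$ nodes, $m$ edges and adjacency matrix $\mathbf{A}\in\{0,1\}^{n\times n}$. Let $\hat{\mathbf{A}}=\mathbf{A}+\mathbf{I}$, let $\hat{\mathbf{D}}$ be the diagonal matrix with $\hat{\mathbf{D}}_{ii}=\sum_j\hat{\mathbf{A}}_{ij}$, let $\tilde{\mathbf{A}}=\hat{\mathbf{D}}^{-1/2}\hat{\mathbf{A}}\hat{\mathbf{D}}^{-1/2}$ and $\tilde{\mathbf{L}}=\mathbf{I}-\tilde{\mathbf{A}}$. Let $\Delta\in\{-1,0,1\}^{m\times n}$ be an oriented incidence matrix of $\mathcal{G}$ (for the $\ell$-th edge $e_\ell=(i,j)$, the $\ell$-th row of $\Delta$ has $-1$ in column $i$, $+1$ in column $j$, and $0$ elsewhere, with arbitrary orientation), and let $\tilde{\Delta}=\Delta\hat{\mathbf{D}}^{-1/2}$. Fix $\mathbf{X}_{\mathrm{in}}\in\mathbb{R}^{n\times d}$ and $\lambda_1,\lambda_2\ge 0$, and let $$f(\mathbf{F})=\frac{\lambda_2}{2}\operatorname{tr}(\mathbf{F}^\top\tilde{\mathbf{L}}\mathbf{F})+\frac12\|\mathbf{F}-\mathbf{X}_{\mathrm{in}}\|_F^2 .$$ Consider the two problems $$\text{(Option I)}\quad \min_{\mathbf{F}\in\mathbb{R}^{n\times d}} \lambda_1\|\tilde{\Delta}\mathbf{F}\|_1+f(\mathbf{F}),\qquad \text{(Option II)}\quad \min_{\mathbf{F}\in\mathbb{R}^{n\times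 d}} \lambda_1\|\tilde{\Delta}\mathbf{F}\|_{21}+f(\mathbf{F}),$$ where $\|\mathbf{X}\|_1=\sum_{ij}|\mathbf{X}_{ij}|$ and $\|\mathbf{X}\|_{21}=\sum_i\|\mathbf{X}_i\|_2$ ($\mathbf{X}_i$ the $i$-th row). Let $\gamma,\beta>0$ and define the elastic message passing iteration, starting from $\mathbf{F}^0=\mathbf{X}_{\mathrm{in}}$ and $\mathbf{Z}^0=\mathbf{0}\in\mathbb{R}^{m\times d}$, by $$\mathbf{Y}^{k}=\mathbf{F}^k-\gamma\nabla f(\mathbf{F}^k)=\big((1-\gamma)\mathbf{I}-\gamma\lambda_2\tilde{\mathbf{L}}\big)\mathbf{F}^k+\gamma\mathbf{X}_{\mathrm{in}},$$ $$\bar{\mathbf{F}}^{k+1}=\mathbf{Y}^k-\gamma\tilde{\Delta}^\top\mathbf{Z}^k,\qquad \bar{\mathbf{Z}}^{k+1}=\mathbf{Z}^k+\beta\tilde{\Delta}\bar{\mathbf{F}}^{k+1},$$ $$\mathbf{Z}^{k+1}=\begin{cases}\text{(Option I)}\ \ \mathbf{Z}^{k+1}_{ij}=\operatorname{sign}(\bar{\mathbf{Z}}^{k+1}_{ij})\min(|\bar{\mathbf{Z}}^{k+1}_{ij}|,\lambda_1)\ \text{for all } i,j,\\[2pt] \text{(Option II)}\ \ \mathbf{Z}^{k+1}_i=\min(\|\bar{\mathbf{Z}}^{k+1}_i\|_2,\lambda_1)\,\dfrac{\bar{\mathbf{Z}}^{k+1}_i}{\|\bar{\mathbf{Z}}^{k+1}_i\|_2}\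 \text{for all } i\in[m]\ (\text{taken as }\mathbf{0}\text{ if }\bar{\mathbf{Z}}^{k+1}_i=\mathbf{0}),\end{cases}$$ $$\mathbf{F}^{k+1}=\mathbf{Y}^k-\gamma\tilde{\Delta}^\top\mathbf{Z}^{k+1}.$$ If $\gamma<\frac{2}{1+\lambda_2\|\tilde{\mathbf{L}}\|_2}$ and $\beta\le\frac{4}{3\gamma\|\tilde{\Delta}\tilde{\Delta}^\top\|_2}$, then $\mathbf{F}^k$ converges to the optimal solution of the Option I problem (when Option I is used in the iteration) or of the Option II problem (when Option II is used). Moreover, $\|\tilde{\mathbf{L}}\|_2=\|\tilde{\Delta}^\top\tilde{\Delta}\|_2=\|\tilde{\Delta}\tilde{\Delta}^\top\|_2\le 2$, so it is sufficient to choose any $\gamma<\frac{2}{1+2\lambda_2}$ and $\beta\le\frac{2}{3\gamma}$.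
   Context: $\|\cdot\|_2$ of a matrix denotes its largest singular value; $\|\cdot\|_F$ is the Frobenius norm. With the specific choice $\gamma=1/(1+\lambda_2)$ the step $\mathbf{Y}^k$ simplifies to $\gamma\mathbf{X}_{\mathrm{in}}+(1-\gamma)\tilde{\mathbf{A}}\mathbf{F}^k$, which is the form used in the paper's figure defining the scheme. *)

theory Defs
  imports "HOL-Analysis.Analysis"
begin

text \<open>Matrices are HOL-Analysis vectors of vectors: a matrix in R^{p x q} is
  real^'q^'p (rows indexed by 'p). Node index type 'n, edge index type 'm,
  feature index type 'd. The Euclidean norm on real^'d^'n is the Frobenius norm.\<close>

definition spec_norm :: "real^'q^'p \<Rightarrow> real" where
  "spec_norm M = onorm (\<lambda>x. M *v x)"

definition diag_mat :: "('n \<Rightarrow> real) \<Rightarrow> real^'n^'n" where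
  "diag_mat v = (\<chi> i j. if i = j then v i else 0)"

definition undirected_adj :: "real^'n^'n \<Rightarrow> bool" where
  "undirected_adj A \<longleftrightarrow> (\<forall>i j. A$i$j = 0 \<or> A$i$j = 1) \<and> (\<forall>i j. A$i$j = A$j$i) \<and> (\<forall>i. A$i$i = 0)"

definition oriented_incidence :: "real^'n^'n \<Rightarrow> real^'n^'m \<Rightarrow> bool" where
  "oriented_incidence A Delta \<longleftrightarrow>
     (\<exists>src tgt :: 'm \<Rightarrow> 'n.
        bij_betw (\<lambda>l. {src l, tgt l}) UNIV {{i, j} | i j. A$i$j = 1} \<and>
        (\<forall>l c. Delta$l$c = (if c = src l then -1 else if c = tgt l then 1 else 0)))"

definition Ahat :: "real^'n^'n \<Rightarrow> real^'n^'n" where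
  "Ahat A = A + mat 1"

definition Dhat_inv_sqrt :: "real^'n^'n \<Rightarrow> real^'n^'n" where
  "Dhat_inv_sqrt A = diag_mat (\<lambda>i. 1 / sqrt (\<Sum>j\<in>UNIV. Ahat A $ i $ j))"

definition Atilde :: "real^'n^'n \<Rightarrow> real^'n^'n" where
  "Atilde A = Dhat_inv_sqrt A ** Ahat A ** Dhat_inv_sqrt A"

definition Ltilde :: "real^'n^'n \<Rightarrow> real^'n^'n" where
  "Ltilde A = mat 1 - Atilde A"

definition Deltatilde :: "real^'n^'n \<Rightarrow> real^'n^'m \<Rightarrow> real^'n^'m" where
  "Deltatilde A Delta = Delta ** Dhat_inv_sqrt A"

definition l1_norm :: "real^'q^'p \<Rightarrow> real" where
  "l1_norm M = (\<Sum>i\<in>UNIV. \<Sum>j\<in>UNIV. \<bar>M$i$j\<bar>)"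

definition l21_norm :: "real^'q^'p \<Rightarrow> real" where
  "l21_norm M = (\<Sum>i\<in>UNIV. norm (M$i))"

definition smooth_part :: "real^'n^'n \<Rightarrow> real^'d^'n \<Rightarrow> real \<Rightarrow> real^'d^'n \<Rightarrow> real" where
  "smooth_part A Xin lam2 F =
     lam2 / 2 * trace (transpose F ** Ltilde A ** F) + 1/2 * (norm (F - Xin))^2"

definition obj_I :: "real^'n^'n \<Rightarrow> real^'n^'m \<Rightarrow> real^'d^'n \<Rightarrow> real \<Rightarrow> real \<Rightarrow> real^'d^'n \<Rightarrow> real" where
  "obj_I A Delta Xin lam1 lam2 F =
     lam1 * l1_norm (Deltatilde A Delta ** F) + smooth_part A Xin lam2 F"

definition obj_II :: "real^'n^'n \<Rightarrow> real^'n^'m \<Rightarrow> real^'d^'n \<Rightarrow> real \<Rightarrow> real \<Rightarrow> real^'d^'n \<Rightarrow> real" where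
  "obj_II A Delta Xin lam1 lam2 F =
     lam1 * l21_norm (Deltatilde A Delta ** F) + smooth_part A Xin lam2 F"

definition clip_I :: "real \<Rightarrow> real^'d^'m \<Rightarrow> real^'d^'m" where
  "clip_I lam1 Z = (\<chi> i j. sgn (Z$i$j) * min \<bar>Z$i$j\<bar> lam1)"

definition clip_II :: "real \<Rightarrow> real^'d^'m \<Rightarrow> real^'d^'m" where
  "clip_II lam1 Z = (\<chi> i. if Z$i = 0 then 0 else (min (norm (Z$i)) lam1 / norm (Z$i)) *\<^sub>R Z$i)"

fun emp :: "(real^'d^'m \<Rightarrow> real^'d^'m) \<Rightarrow> real^'n^'n \<Rightarrow> real^'n^'m \<Rightarrow> real^'d^'n
      \<Rightarrow> real \<Rightarrow> real \<Rightarrow> real \<Rightarrow> nat \<Rightarrow> (real^'d^'n) \<times> (real^'d^'m)" where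
  "emp P A Delta Xin lam2 gam bet 0 = (Xin, 0)"
| "emp P A Delta Xin lam2 gam bet (Suc k) =
     (let (F, Z) = emp P A Delta Xin lam2 gam bet k;
          Dt = Deltatilde A Delta;
          Y = ((1 - gam) *\<^sub>R mat 1 - (gam * lam2) *\<^sub>R Ltilde A) ** F + gam *\<^sub>R Xin;
          Fb = Y - gam *\<^sub>R (transpose Dt ** Z);
          Zb = Z + bet *\<^sub>R (Dt ** Fb);
          Z' = P Zb
      in (Y - gam *\<^sub>R (transpose Dt ** Z'), Z'))"

text \<open>F converges to the (unique) minimiser of obj: a minimiser exists and every
  minimiser is the limit.\<close>
definition converges_to_opt :: "(nat \<Rightarrow> 'a::topological_space) \<Rightarrow> ('a \<Rightarrow> real) \<Rightarrow> bool" where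
  "converges_to_opt Fs obj \<longleftrightarrow>
     (\<exists>Fo. \<forall>F. obj Fo \<le> obj F) \<and> (\<forall>Fo. (\<forall>F. obj Fo \<le> obj F) \<longrightarrow> Fs \<longlonglongrightarrow> Fo)"

end

theory Submission
  imports Defs
begin



lemma mm_scaleR_right: "(M::real^'q^'p) ** (c *\<^sub>R F :: real^'d^'q) = c *\<^sub>R (M ** F)"
  by (simp add: matrix_matrix_mult_def vec_eq_iff sum_distrib_left algebra_simps)

lemma mm_scaleR_left: "(c *\<^sub>R (M::real^'q^'p)) ** (F :: real^'d^'q) = c *\<^sub>R (M ** F)"
  by (simp add: matrix_matrix_mult_def vec_eq_iff sum_distrib_left algebra_simps)

lemma mm_diff_right: "(M::real^'q^'p) ** ((F::real^'d^'q) - G) = M ** F - M ** G"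
  by (simp add: matrix_matrix_mult_def vec_eq_iff sum_subtractf algebra_simps)

lemma mm_add_left: "((M::real^'q^'p) + N) ** (F::real^'d^'q) = M ** F + N ** F"
  by (simp add: matrix_matrix_mult_def vec_eq_iff sum.distrib algebra_simps)

lemma mm_diff_left: "((M::real^'q^'p) - N) ** (F::real^'d^'q) = M ** F - N ** F"
  by (simp add: matrix_matrix_mult_def vec_eq_iff sum_subtractf algebra_simps)

lemma mm_zero_right: "(M::real^'q^'p) ** (0::real^'d^'q) = 0" by simp

lemma inner_mat: "inner (X::real^'d^'p) Y = (\<Sum>i\<in>UNIV. \<Sum>j\<in>UNIV. X$i$j * Y$i$j)"
  by (simp add: inner_vec_def)

lemma inner_mm_adjoint:
  "inner ((M::real^'q^'p) ** (F::real^'d^'q)) Z = inner F (transpose M ** Z)"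
proof -
  have "inner (M ** F) Z = (\<Sum>i\<in>UNIV. \<Sum>j\<in>UNIV. (\<Sum>k\<in>UNIV. M$i$k * F$k$j) * Z$i$j)"
    by (simp add: inner_mat matrix_matrix_mult_def)
  also have "\<dots> = (\<Sum>i\<in>UNIV. \<Sum>j\<in>UNIV. \<Sum>k\<in>UNIV. M$i$k * F$k$j * Z$i$j)"
    by (simp add: sum_distrib_right)
  also have "\<dots> = (\<Sum>i\<in>UNIV. \<Sum>k\<in>UNIV. \<Sum>j\<in>UNIV. M$i$k * F$k$j * Z$i$j)"
    by (rule sum.cong[OF refl], rule sum.swap)
  also have "\<dots> = (\<Sum>k\<in>UNIV. \<Sum>i\<in>UNIV. \<Sum>j\<in>UNIV. M$i$k * F$k$j * Z$i$j)"
    by (rule sum.swap)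
  also have "\<dots> = (\<Sum>k\<in>UNIV. \<Sum>j\<in>UNIV. \<Sum>i\<in>UNIV. M$i$k * F$k$j * Z$i$j)"
    by (rule sum.cong[OF refl], rule sum.swap)
  also have "\<dots> = (\<Sum>k\<in>UNIV. \<Sum>j\<in>UNIV. F$k$j * (\<Sum>i\<in>UNIV. M$i$k * Z$i$j))"
    by (simp add: sum_distrib_left mult_ac)
  also have "\<dots> = inner F (transpose M ** Z)"
    by (simp add: inner_mat matrix_matrix_mult_def transpose_def)
  finally show ?thesis .
qed

lemma norm_sq_columns: "(norm (Z::real^'d^'p))^2 = (\<Sum>j\<in>UNIV. (norm (column j Z))^2)"
proof -
  have "(norm Z)^2 = (\<Sum>i\<in>UNIV. \<Sum>j\<in>UNIV. Z$i$j * Z$i$j)"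
    by (simp add: power2_norm_eq_inner inner_mat)
  also have "\<dots> = (\<Sum>j\<in>UNIV. \<Sum>i\<in>UNIV. Z$i$j * Z$i$j)" by (rule sum.swap)
  also have "\<dots> = (\<Sum>j\<in>UNIV. (norm (column j Z))^2)"
    by (simp add: power2_norm_eq_inner inner_vec_def column_def)
  finally show ?thesis .
qed

lemma column_mm: "column j ((M::real^'q^'p) ** (Z::real^'d^'q)) = M *v column j Z"
  by (simp add: column_def matrix_matrix_mult_def matrix_vector_mult_def vec_eq_iff)

lemma spec_norm_nonneg: "spec_norm (M::real^'q^'p) \<ge> 0"
  unfolding spec_norm_def by (rule onorm_pos_le) simp

lemma spec_norm_vec: "norm ((M::real^'q^'p) *v x) \<le> spec_norm M * norm x"
  unfolding spec_norm_def by (rule onorm) simp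

lemma norm_mm_le: "norm ((M::real^'q^'p) ** (Z::real^'d^'q)) \<le> spec_norm M * norm Z"
proof -
  have "(norm (M ** Z))^2 = (\<Sum>j\<in>UNIV. (norm (M *v column j Z))^2)"
    by (simp add: norm_sq_columns column_mm)
  also have "\<dots> \<le> (\<Sum>j\<in>UNIV. (spec_norm M * norm (column j Z))^2)"
    by (intro sum_mono power_mono spec_norm_vec) simp
  also have "\<dots> = (spec_norm M * norm Z)^2"
    by (simp add: norm_sq_columns power_mult_distrib sum_distrib_left)
  finally show ?thesis
    using spec_norm_nonneg[of M] by (simp add: power2_le_iff_abs_le)
qed




lemma inner_mv_adjoint:
  "inner ((M::real^'q^'p) *v x) y = inner x (transpose M *v y)"
proof -
  have "inner (M *v x) y = (\<Sum>i\<in>UNIV. (\<Sum>k\<in>UNIV. M$i$k * x$k) * y$i)"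
    by (simp add: inner_vec_def matrix_vector_mult_def)
  also have "\<dots> = (\<Sum>i\<in>UNIV. \<Sum>k\<in>UNIV. M$i$k * x$k * y$i)"
    by (simp add: sum_distrib_right)
  also have "\<dots> = (\<Sum>k\<in>UNIV. \<Sum>i\<in>UNIV. M$i$k * x$k * y$i)"
    by (rule sum.swap)
  also have "\<dots> = (\<Sum>k\<in>UNIV. x$k * (\<Sum>i\<in>UNIV. M$i$k * y$i))"
    by (simp add: sum_distrib_left mult_ac)
  also have "\<dots> = inner x (transpose M *v y)"
    by (simp add: inner_vec_def matrix_vector_mult_def transpose_def)
  finally show ?thesis .
qed

lemma spec_norm_le: "(\<And>x. norm ((M::real^'q^'p) *v x) \<le> b * norm x) \<Longrightarrow> spec_norm M \<le> b"
  unfolding spec_norm_def by (rule onorm_le)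

lemma spec_transpose_le: "spec_norm (transpose (M::real^'q^'p)) \<le> spec_norm M"
proof (rule spec_norm_le)
  fix y
  have "(norm (transpose M *v y))^2 = inner (M *v (transpose M *v y)) y"
    using inner_mv_adjoint[of M "transpose M *v y" y] by (simp only: power2_norm_eq_inner)
  also have "\<dots> \<le> norm (M *v (transpose M *v y)) * norm y"
    by (rule norm_cauchy_schwarz)
  also have "\<dots> \<le> spec_norm M * norm (transpose M *v y) * norm y"
    by (intro mult_right_mono spec_norm_vec) simp
  finally have h: "(norm (transpose M *v y))^2 \<le> spec_norm M * norm y * norm (transpose M *v y)"
    by (simp add: mult_ac)
  show "norm (transpose M *v y) \<le> spec_norm M * norm y"
  proof (cases "norm (transpose M *v y) = 0")
    case True then show ?thesis using spec_norm_nonneg[of M] by simp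
  next
    case False
    then have "norm (transpose M *v y) > 0" by simp
    then show ?thesis using h by (simp add: power2_eq_square)
  qed
qed

lemma spec_transpose: "spec_norm (transpose (M::real^'q^'p)) = spec_norm M"
  using spec_transpose_le[of M] spec_transpose_le[of "transpose M"] by simp

lemma spec_tM_M: "spec_norm (transpose (M::real^'q^'p) ** M) = (spec_norm M)^2"
proof (rule antisym)
  show "spec_norm (transpose M ** M) \<le> (spec_norm M)^2"
  proof (rule spec_norm_le)
    fix x
    have "norm ((transpose M ** M) *v x) = norm (transpose M *v (M *v x))"
      by (simp add: matrix_vector_mul_assoc)
    also have "\<dots> \<le> spec_norm M * norm (M *v x)"
      using spec_norm_vec[of "transpose M" "M *v x"] by (simp add: spec_transpose)
    also have "\<dots> \<le> spec_norm M * (spec_norm M * norm x)"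
      by (intro mult_left_mono spec_norm_vec spec_norm_nonneg)
    finally show "norm ((transpose M ** M) *v x) \<le> (spec_norm M)^2 * norm x"
      by (simp add: power2_eq_square mult_ac)
  qed
next
  let ?s = "spec_norm (transpose M ** M)"
  have "spec_norm M \<le> sqrt ?s"
  proof (rule spec_norm_le)
    fix x
    have "(norm (M *v x))^2 = inner x ((transpose M ** M) *v x)"
      by (simp add: inner_mv_adjoint power2_norm_eq_inner matrix_vector_mul_assoc)
    also have "\<dots> \<le> norm x * norm ((transpose M ** M) *v x)"
      by (rule norm_cauchy_schwarz)
    also have "\<dots> \<le> norm x * (?s * norm x)"
      by (intro mult_left_mono spec_norm_vec) simp
    finally have "(norm (M *v x))^2 \<le> (sqrt ?s * norm x)^2"
      using spec_norm_nonneg[of "transpose M ** M"]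
      by (simp add: power_mult_distrib power2_eq_square mult_ac)
    then show "norm (M *v x) \<le> sqrt ?s * norm x"
      using spec_norm_nonneg[of "transpose M ** M"]
      by (meson norm_ge_zero power2_le_imp_le real_sqrt_ge_zero zero_le_mult_iff)
  qed
  then have "(spec_norm M)^2 \<le> (sqrt ?s)^2"
    by (intro power_mono spec_norm_nonneg)
  then show "(spec_norm M)^2 \<le> ?s" using spec_norm_nonneg[of "transpose M ** M"] by simp
qed

lemma spec_M_tM: "spec_norm ((M::real^'q^'p) ** transpose M) = (spec_norm M)^2"
  using spec_tM_M[of "transpose M"] by (simp add: spec_transpose)

lemma norm_mm_sq: "(norm ((M::real^'q^'p) ** (Z::real^'d^'q)))^2 \<le> (spec_norm M)^2 * (norm Z)^2"
proof -
  have "norm (M ** Z) \<le> spec_norm M * norm Z" by (rule norm_mm_le)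
  then have "(norm (M ** Z))^2 \<le> (spec_norm M * norm Z)^2"
    by (intro power_mono) auto
  then show ?thesis by (simp add: power_mult_distrib)
qed

lemma norm_tmm_sq: "(norm (transpose (M::real^'q^'p) ** (Z::real^'d^'p)))^2 \<le> (spec_norm M)^2 * (norm Z)^2"
  using norm_mm_sq[of "transpose M" Z] by (simp add: spec_transpose)




lemma diag_mm: "(diag_mat r ** (M::real^'q^'n))$i$j = r i * M$i$j"
proof -
  have "(diag_mat r ** M)$i$j = (\<Sum>k\<in>UNIV. (if i = k then r i else 0) * M$k$j)"
    by (simp add: matrix_matrix_mult_def diag_mat_def)
  also have "\<dots> = (\<Sum>k\<in>UNIV. if i = k then r i * M$k$j else 0)"
    by (rule sum.cong) auto
  also have "\<dots> = r i * M$i$j" by simp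
  finally show ?thesis .
qed

lemma mm_diag: "((M::real^'n^'q) ** diag_mat r)$i$j = M$i$j * r j"
proof -
  have "(M ** diag_mat r)$i$j = (\<Sum>k\<in>UNIV. M$i$k * (if k = j then r k else 0))"
    by (simp add: matrix_matrix_mult_def diag_mat_def)
  also have "\<dots> = (\<Sum>k\<in>UNIV. if k = j then M$i$k * r k else 0)"
    by (rule sum.cong) auto
  also have "\<dots> = M$i$j * r j" by simp
  finally show ?thesis .
qed

definition rr :: "real^'n^'n \<Rightarrow> 'n \<Rightarrow> real" where
  "rr A i = 1 / sqrt (\<Sum>j\<in>UNIV. Ahat A $ i $ j)"

lemma Dhat_rr: "Dhat_inv_sqrt A = diag_mat (rr A)"
  unfolding Dhat_inv_sqrt_def rr_def[abs_def] by (rule refl)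

lemma dhat_eq: "(\<Sum>j\<in>UNIV. Ahat A $ i $ j) = 1 + (\<Sum>j\<in>UNIV. A $ i $ j)"
proof -
  have "(\<Sum>j\<in>UNIV. Ahat A $ i $ j) = (\<Sum>j\<in>UNIV. A $ i $ j + (if i = j then 1 else 0))"
    by (simp add: Ahat_def mat_def)
  also have "\<dots> = (\<Sum>j\<in>UNIV. A $ i $ j) + 1"
    by (simp add: sum.distrib)
  finally show ?thesis by simp
qed

lemma dhat_ge1:
  assumes "undirected_adj A" shows "(\<Sum>j\<in>UNIV. Ahat A $ i $ j) \<ge> 1"
proof -
  have "\<forall>j. A$i$j \<ge> 0" using assms unfolding undirected_adj_def by (metis order_refl zero_le_one)
  then have "(\<Sum>j\<in>UNIV. A $ i $ j) \<ge> 0" by (simp add: sum_nonneg)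
  then show ?thesis by (simp add: dhat_eq)
qed

lemma rr_sq:
  assumes "undirected_adj A" shows "(rr A i)^2 * (\<Sum>j\<in>UNIV. Ahat A $ i $ j) = 1"
  using dhat_ge1[OF assms, of i] by (simp add: rr_def power_divide)

lemma Atilde_entry: "Atilde A $ i $ j = rr A i * Ahat A $ i $ j * rr A j"
  by (simp add: Atilde_def Dhat_rr diag_mm mm_diag)

lemma Ltilde_entry: "Ltilde A $ i $ j = (if i = j then 1 else 0) - rr A i * Ahat A $ i $ j * rr A j"
  by (simp add: Ltilde_def Atilde_entry mat_def)

lemma Dt_entry: "Deltatilde A Delta $ l $ i = Delta $ l $ i * rr A i"
  by (simp add: Deltatilde_def Dhat_rr mm_diag)

lemma Ahat_sym: "undirected_adj A \<Longrightarrow> Ahat A $ i $ j = Ahat A $ j $ i"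
  by (auto simp: Ahat_def undirected_adj_def mat_def)

lemma Ahat_nonneg: "undirected_adj A \<Longrightarrow> Ahat A $ i $ j \<ge> 0"
  unfolding Ahat_def undirected_adj_def mat_def by (auto, metis order_refl zero_le_one)

lemma quad_Atilde_ge:
  assumes u: "undirected_adj A"
  shows "inner x (Atilde A *v x) \<ge> - ((norm x)^2)"
proof -
  define y where "y i = rr A i * x$i" for i
  define H where "H i j = Ahat A $ i $ j" for i j
  have xi: "(x$i)^2 = (\<Sum>j\<in>UNIV. H i j * (y i)^2)" for i
  proof -
    have "(\<Sum>j\<in>UNIV. H i j * (y i)^2) = (\<Sum>j\<in>UNIV. Ahat A $ i $ j) * (y i)^2"
      by (simp add: H_def sum_distrib_right)
    also have "\<dots> = (rr A i)^2 * (\<Sum>j\<in>UNIV. Ahat A $ i $ j) * (x$i)^2"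
      by (simp add: y_def power_mult_distrib)
    finally have "(\<Sum>j\<in>UNIV. H i j * (y i)^2) = (rr A i)^2 * (\<Sum>j\<in>UNIV. Ahat A $ i $ j) * (x$i)^2" .
    then show ?thesis using rr_sq[OF u, of i] by simp
  qed
  have n: "(norm x)^2 = (\<Sum>i\<in>UNIV. \<Sum>j\<in>UNIV. H i j * (y i)^2)"
  proof -
    have "(norm x)^2 = (\<Sum>i\<in>UNIV. (x$i)^2)"
      unfolding power2_norm_eq_inner inner_vec_def by (simp add: power2_eq_square)
    then show ?thesis by (simp only: xi)
  qed
  have q: "inner x (Atilde A *v x) = (\<Sum>i\<in>UNIV. \<Sum>j\<in>UNIV. H i j * y i * y j)"
    by (simp add: inner_vec_def matrix_vector_mult_def Atilde_entry H_def y_def sum_distrib_left mult_ac)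
  have s1: "(\<Sum>i\<in>UNIV. \<Sum>j\<in>UNIV. H i j * (y j)^2) = (\<Sum>i\<in>UNIV. \<Sum>j\<in>UNIV. H i j * (y i)^2)"
  proof -
    have "(\<Sum>i\<in>UNIV. \<Sum>j\<in>UNIV. H i j * (y j)^2) = (\<Sum>j\<in>UNIV. \<Sum>i\<in>UNIV. H i j * (y j)^2)"
      by (rule sum.swap)
    also have "\<dots> = (\<Sum>j\<in>UNIV. \<Sum>i\<in>UNIV. H j i * (y j)^2)"
      using Ahat_sym[OF u] by (simp add: H_def)
    finally show ?thesis .
  qed
  have "0 \<le> (\<Sum>i\<in>UNIV. \<Sum>j\<in>UNIV. H i j * (y i + y j)^2)"
    using Ahat_nonneg[OF u] by (intro sum_nonneg) (simp add: H_def)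
  also have "\<dots> = (\<Sum>i\<in>UNIV. \<Sum>j\<in>UNIV. H i j * (y i)^2) + (\<Sum>i\<in>UNIV. \<Sum>j\<in>UNIV. H i j * (y j)^2)
      + 2 * (\<Sum>i\<in>UNIV. \<Sum>j\<in>UNIV. H i j * y i * y j)"
    by (simp add: sum.distrib sum_distrib_left power2_sum algebra_simps)
  finally have "0 \<le> 2 * (norm x)^2 + 2 * inner x (Atilde A *v x)"
    by (simp add: s1 n q)
  then show ?thesis by simp
qed




lemma sum_indicator_card: "(\<Sum>l\<in>(UNIV::'a::finite set). if P l then (1::real) else 0) = real (card {l. P l})"
  by (simp add: sum.If_cases)

lemma incidence_gram:
  fixes A :: "real^'n^'n" and Delta :: "real^'n^'m"
  assumes u: "undirected_adj A" and oi: "oriented_incidence A Delta"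
  shows "(\<Sum>l\<in>UNIV. Delta$l$i * Delta$l$j) = (if i = j then (\<Sum>k\<in>UNIV. A$i$k) else - A$i$j)"
proof -
  obtain src tgt :: "'m \<Rightarrow> 'n" where
    bij: "bij_betw (\<lambda>l. {src l, tgt l}) UNIV {{i, j} | i j. A$i$j = 1}" and
    D: "\<And>l c. Delta$l$c = (if c = src l then -1 else if c = tgt l then 1 else 0)"
    using oi unfolding oriented_incidence_def by blast
  define e where "e l = {src l, tgt l}" for l
  define E where "E = {{i, j} | i j. A$i$j = 1}"
  have A01: "A$a$b = 0 \<or> A$a$b = 1" for a b using u by (simp add: undirected_adj_def)
  have Asym: "A$a$b = A$b$a" for a b using u by (simp add: undirected_adj_def)
  have Adiag: "A$a$a = 0" for a using u by (simp add: undirected_adj_def)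
  have inj: "inj e" using bij by (simp add: bij_betw_def e_def[abs_def])
  have img: "range e = E" using bij by (simp add: bij_betw_def e_def[abs_def] E_def)
  have eE: "e l \<in> E" for l using img by blast
  have inE: "{a, b} \<in> E \<longleftrightarrow> A$a$b = 1" for a b
  proof
    assume "{a, b} \<in> E"
    then obtain c d where "{a, b} = {c, d}" "A$c$d = 1" unfolding E_def by blast
    then show "A$a$b = 1" using Asym by (auto simp: doubleton_eq_iff)
  qed (auto simp: E_def)
  have neq: "src l \<noteq> tgt l" for l
  proof
    assume "src l = tgt l"
    then have "{src l, src l} \<in> E" using eE[of l] by (simp add: e_def)
    then have "A$(src l)$(src l) = 1" using inE by blast
    then show False using Adiag by simp
  qed
  show ?thesis
  proof (cases "i = j")
    case True
    have "Delta$l$i * Delta$l$i = (if i \<in> e l then 1 else 0)" for l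
      using neq[of l] by (auto simp: D e_def)
    then have "(\<Sum>l\<in>UNIV. Delta$l$i * Delta$l$j) = real (card {l. i \<in> e l})"
      using True by (simp add: sum_indicator_card)
    also have "card {l. i \<in> e l} = card (e ` {l. i \<in> e l})"
      by (rule card_image[symmetric]) (meson inj inj_on_subset subset_UNIV)
    also have "e ` {l. i \<in> e l} = {S \<in> E. i \<in> S}" using img by blast
    also have "{S \<in> E. i \<in> S} = (\<lambda>k. {i, k}) ` {k. A$i$k = 1}"
    proof (intro set_eqI iffI)
      fix S assume "S \<in> {S \<in> E. i \<in> S}"
      then obtain c d where S: "S = {c, d}" "A$c$d = 1" "i \<in> S" unfolding E_def by blast
      then show "S \<in> (\<lambda>k. {i, k}) ` {k. A$i$k = 1}"
        using Asym by (auto simp: insert_commute)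
    next
      fix S assume "S \<in> (\<lambda>k. {i, k}) ` {k. A$i$k = 1}"
      then show "S \<in> {S \<in> E. i \<in> S}" using inE by auto
    qed
    also have "card ((\<lambda>k. {i, k}) ` {k. A$i$k = 1}) = card {k. A$i$k = 1}"
      by (rule card_image) (auto simp: inj_on_def doubleton_eq_iff)
    also have "real (card {k. A$i$k = 1}) = (\<Sum>k\<in>UNIV. A$i$k)"
    proof -
      have "(\<Sum>k\<in>UNIV. A$i$k) = (\<Sum>k\<in>UNIV. if A$i$k = 1 then 1 else 0)"
        by (rule sum.cong) (use A01 in auto)
      then show ?thesis by (simp add: sum_indicator_card)
    qed
    finally show ?thesis using True by simp
  next
    case False
    have "Delta$l$i * Delta$l$j = (if e l = {i, j} then -1 else 0)" for l
      using neq[of l] False by (auto simp: D e_def doubleton_eq_iff)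
    then have "(\<Sum>l\<in>UNIV. Delta$l$i * Delta$l$j) = - real (card {l. e l = {i, j}})"
      by (simp add: sum.If_cases)
    also have "real (card {l. e l = {i, j}}) = A$i$j"
    proof (cases "A$i$j = 1")
      case True
      then have "{i, j} \<in> E" using inE by blast
      then obtain l0 where l0: "e l0 = {i, j}" using img by (metis imageE)
      then have "{l. e l = {i, j}} = {l0}" using inj by (auto simp: inj_def)
      then show ?thesis using True by simp
    next
      case F: False
      then have "{i, j} \<notin> E" using inE by blast
      then have "{l. e l = {i, j}} = {}" using eE by (metis (mono_tags, lifting) empty_Collect_eq)
      then show ?thesis using F A01[of i j] by simp
    qed
    finally show ?thesis using False by simp
  qed
qed

lemma Ltilde_gram:
  fixes A :: "real^'n^'n" and Delta :: "real^'n^'m"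
  assumes u: "undirected_adj A" and oi: "oriented_incidence A Delta"
  shows "Ltilde A = transpose (Deltatilde A Delta) ** Deltatilde A Delta"
proof -
  have "Ltilde A $ i $ j = (transpose (Deltatilde A Delta) ** Deltatilde A Delta) $ i $ j" for i j
  proof -
    have "(transpose (Deltatilde A Delta) ** Deltatilde A Delta) $ i $ j
        = (\<Sum>l\<in>UNIV. Delta$l$i * rr A i * (Delta$l$j * rr A j))"
      by (simp add: matrix_matrix_mult_def transpose_def Dt_entry)
    also have "\<dots> = rr A i * rr A j * (\<Sum>l\<in>UNIV. Delta$l$i * Delta$l$j)"
      by (simp add: sum_distrib_left mult_ac)
    also have "\<dots> = rr A i * rr A j * (if i = j then (\<Sum>k\<in>UNIV. A$i$k) else - A$i$j)"
      by (simp add: incidence_gram[OF u oi])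
    also have "\<dots> = Ltilde A $ i $ j"
    proof (cases "i = j")
      case True
      have "(rr A i)^2 * (1 + (\<Sum>k\<in>UNIV. A$i$k)) = 1"
        using rr_sq[OF u, of i] by (simp add: dhat_eq)
      moreover have "A$i$i = 0" using u by (simp add: undirected_adj_def)
      ultimately show ?thesis using True
        by (simp add: Ltilde_entry Ahat_def mat_def power2_eq_square algebra_simps)
    next
      case False
      then show ?thesis by (simp add: Ltilde_entry Ahat_def mat_def)
    qed
    finally show ?thesis by simp
  qed
  then show ?thesis by (simp add: vec_eq_iff)
qed

lemma spec_Dt_le2:
  fixes A :: "real^'n^'n" and Delta :: "real^'n^'m"
  assumes u: "undirected_adj A" and oi: "oriented_incidence A Delta"
  shows "(spec_norm (Deltatilde A Delta))^2 \<le> 2"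
proof -
  let ?D = "Deltatilde A Delta"
  have "spec_norm ?D \<le> sqrt 2"
  proof (rule spec_norm_le)
    fix x :: "real^'n"
    have "(norm (?D *v x))^2 = inner x (transpose ?D *v (?D *v x))"
      using inner_mv_adjoint[of ?D x "?D *v x"] by (simp only: power2_norm_eq_inner)
    also have "\<dots> = inner x ((transpose ?D ** ?D) *v x)"
      by (simp only: matrix_vector_mul_assoc)
    also have "\<dots> = inner x (Ltilde A *v x)" by (simp add: Ltilde_gram[OF u oi])
    also have "\<dots> = (norm x)^2 - inner x (Atilde A *v x)"
    proof -
      have "(mat 1 - Atilde A) *v x = x - Atilde A *v x" by (simp add: matrix_vector_mult_diff_rdistrib)
      then show ?thesis by (simp add: Ltilde_def inner_diff_right dot_square_norm)
    qed
    also have "\<dots> \<le> (sqrt 2 * norm x)^2"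
    proof -
      have "(sqrt 2 * norm x)^2 = 2 * (norm x)^2" by (simp add: power_mult_distrib)
      then show ?thesis using quad_Atilde_ge[OF u, of x] by linarith
    qed
    finally show "norm (?D *v x) \<le> sqrt 2 * norm x"
      by (rule power2_le_imp_le) simp
  qed
  then have "(spec_norm ?D)^2 \<le> (sqrt 2)^2" by (intro power_mono spec_norm_nonneg)
  then show ?thesis by simp
qed




definition SI :: "real \<Rightarrow> (real^'d^'m) set" where "SI lam = {Z. \<forall>i j. \<bar>Z$i$j\<bar> \<le> lam}"
definition SII :: "real \<Rightarrow> (real^'d^'m) set" where "SII lam = {Z. \<forall>i. norm (Z$i) \<le> lam}"

lemma norm_sq_rows: "(norm (Z::real^'d^'m))^2 = (\<Sum>i\<in>UNIV. (norm (Z$i))^2)"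
  unfolding power2_norm_eq_inner inner_vec_def by simp

lemma norm_sq_entries: "(norm (Z::real^'d^'m))^2 = (\<Sum>i\<in>UNIV. \<Sum>j\<in>UNIV. (Z$i$j)^2)"
  unfolding norm_sq_rows power2_norm_eq_inner inner_vec_def by (simp add: power2_eq_square)

lemma clip_scalar:
  assumes "lam \<ge> 0" "\<bar>w\<bar> \<le> lam"
  shows "(u - sgn u * min \<bar>u\<bar> lam) * (w - sgn u * min \<bar>u\<bar> lam) \<le> (0::real)"
proof (cases "\<bar>u\<bar> \<le> lam")
  case True
  then have "sgn u * min \<bar>u\<bar> lam = u" by (simp add: min_def sgn_mult_abs)
  then show ?thesis by simp
next
  case False
  show ?thesis
  proof (cases "u > 0")
    case True
    then have "sgn u * min \<bar>u\<bar> lam = lam" using False by (simp add: min_def)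
    then show ?thesis using False True assms by (simp add: mult_le_0_iff)
  next
    case F2: False
    then have "u < 0" using False assms by auto
    then have "sgn u * min \<bar>u\<bar> lam = - lam" using False by (simp add: min_def)
    then show ?thesis using False \<open>u < 0\<close> assms by (simp add: mult_le_0_iff)
  qed
qed

lemma clip_scalar_in: "lam \<ge> 0 \<Longrightarrow> \<bar>sgn u * min \<bar>u\<bar> lam\<bar> \<le> (lam::real)"
  by (simp add: abs_mult abs_sgn_eq)

lemma clipI_in: "lam \<ge> 0 \<Longrightarrow> clip_I lam u \<in> SI lam"
  by (simp add: SI_def clip_I_def clip_scalar_in)

lemma clipI_var:
  assumes "lam \<ge> 0" "w \<in> SI lam"
  shows "inner (u - clip_I lam u) (w - clip_I lam u) \<le> 0"
proof -
  have "inner (u - clip_I lam u) (w - clip_I lam u)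
     = (\<Sum>i\<in>UNIV. \<Sum>j\<in>UNIV. (u$i$j - sgn (u$i$j) * min \<bar>u$i$j\<bar> lam) * (w$i$j - sgn (u$i$j) * min \<bar>u$i$j\<bar> lam))"
    by (simp add: inner_mat clip_I_def)
  also have "\<dots> \<le> 0"
    using assms by (intro sum_nonpos clip_scalar) (auto simp: SI_def)
  finally show ?thesis .
qed

lemma SI_support: "lam \<ge> 0 \<Longrightarrow> w \<in> SI lam \<Longrightarrow> inner V w \<le> lam * l1_norm V"
proof -
  assume "lam \<ge> 0" "w \<in> SI lam"
  then have "V$i$j * w$i$j \<le> lam * \<bar>V$i$j\<bar>" for i j
  proof -
    have "V$i$j * w$i$j \<le> \<bar>V$i$j\<bar> * \<bar>w$i$j\<bar>" by (metis abs_ge_self abs_mult)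
    also have "\<dots> \<le> \<bar>V$i$j\<bar> * lam" using \<open>w \<in> SI lam\<close> by (intro mult_left_mono) (auto simp: SI_def)
    finally show ?thesis by (simp add: mult.commute)
  qed
  then have "inner V w \<le> (\<Sum>i\<in>UNIV. \<Sum>j\<in>UNIV. lam * \<bar>V$i$j\<bar>)"
    unfolding inner_mat by (intro sum_mono) auto
  then show ?thesis by (simp add: l1_norm_def sum_distrib_left)
qed

lemma SI_attain: "lam \<ge> 0 \<Longrightarrow> \<exists>w\<in>SI lam. inner V w = lam * l1_norm V"
proof
  assume "lam \<ge> 0"
  let ?w = "\<chi> i j. lam * sgn (V$i$j)"
  show "?w \<in> SI lam" using \<open>lam \<ge> 0\<close> by (simp add: SI_def abs_mult abs_sgn_eq)
  have "inner V ?w = (\<Sum>i\<in>UNIV. \<Sum>j\<in>UNIV. lam * \<bar>V$i$j\<bar>)"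
    unfolding inner_mat by (intro sum.cong refl) (simp add: abs_sgn mult_ac)
  then show "inner V ?w = lam * l1_norm V"
    by (simp add: l1_norm_def sum_distrib_left)
qed

lemma SI_convex: "convex (SI lam)"
  unfolding convex_def SI_def
proof (clarsimp)
  fix x y :: "real^'d^'m" and u v :: real and i j
  assume h: "\<forall>i j. \<bar>x$i$j\<bar> \<le> lam" "\<forall>i j. \<bar>y$i$j\<bar> \<le> lam" "0 \<le> u" "0 \<le> v" "u + v = 1"
  have "\<bar>u * x$i$j + v * y$i$j\<bar> \<le> \<bar>u * x$i$j\<bar> + \<bar>v * y$i$j\<bar>"
    by (rule abs_triangle_ineq)
  also have "\<dots> = u * \<bar>x$i$j\<bar> + v * \<bar>y$i$j\<bar>"
    using h by (simp add: abs_mult)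
  also have "\<dots> \<le> u * lam + v * lam" using h by (intro add_mono mult_left_mono) auto
  also have "\<dots> = (u + v) * lam" by (simp only: distrib_right)
  finally show "\<bar>u * x$i$j + v * y$i$j\<bar> \<le> lam" using h by simp
qed

lemma SI_compact: "compact (SI lam :: (real^'d^'m) set)"
unfolding compact_eq_bounded_closed proof (intro conjI)
  show "bounded (SI lam :: (real^'d^'m) set)"
    unfolding bounded_iff
  proof (intro exI ballI)
    fix Z :: "real^'d^'m" assume "Z \<in> SI lam"
    then have "(Z$i$j)^2 \<le> lam^2" for i j
      by (simp add: SI_def abs_le_square_iff[symmetric] order_trans[OF abs_ge_self]) 
         (metis abs_le_square_iff abs_of_nonneg abs_ge_zero order_trans)
    then have "(norm Z)^2 \<le> (\<Sum>i\<in>(UNIV::'m set). \<Sum>j\<in>(UNIV::'d set). lam^2)"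
      unfolding norm_sq_entries by (intro sum_mono) auto
    then show "norm Z \<le> sqrt (\<Sum>i\<in>(UNIV::'m set). \<Sum>j\<in>(UNIV::'d set). lam^2)"
      by (simp add: real_le_rsqrt)
  qed
  have "SI lam = (\<Inter>i. \<Inter>j. {Z::real^'d^'m. \<bar>Z$i$j\<bar> \<le> lam})" by (auto simp: SI_def)
  moreover have "closed (\<Inter>i. \<Inter>j. {Z::real^'d^'m. \<bar>Z$i$j\<bar> \<le> lam})"
    by (intro closed_INT ballI closed_Collect_le continuous_intros)
  ultimately show "closed (SI lam :: (real^'d^'m) set)" by (simp only:)
qed

lemma zero_SI: "lam \<ge> 0 \<Longrightarrow> 0 \<in> SI lam" by (simp add: SI_def)

lemma row_proj_in:
  assumes "lam \<ge> 0"
  shows "norm (if (v::real^'d) = 0 then 0 else (min (norm v) lam / norm v) *\<^sub>R v) \<le> lam"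
proof (cases "v = 0")
  case False
  then have "norm ((min (norm v) lam / norm v) *\<^sub>R v) = min (norm v) lam"
    using assms by (simp add: abs_of_nonneg)
  then show ?thesis using False by simp
qed (use assms in simp)

lemma row_proj_var:
  fixes v w :: "real^'d"
  assumes "lam \<ge> 0" "norm w \<le> lam"
  defines "p \<equiv> (if v = 0 then 0 else (min (norm v) lam / norm v) *\<^sub>R v)"
  shows "inner (v - p) (w - p) \<le> 0"
proof (cases "v = 0 \<or> norm v \<le> lam")
  case True
  then have "p = v" by (auto simp: p_def min_def)
  then show ?thesis by simp
next
  case False
  then have v0: "v \<noteq> 0" and gt: "norm v > lam" by auto
  have p: "p = (lam / norm v) *\<^sub>R v" using v0 gt by (simp add: p_def min_def)
  define t where "t = 1 - lam / norm v"
  have "lam / norm v \<le> 1" using gt by (simp add: divide_le_eq_1)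
  then have t0: "t \<ge> 0" by (simp add: t_def)
  have vp: "v - p = t *\<^sub>R v" by (simp add: p t_def algebra_simps)
  have "inner v (w - p) = inner v w - lam * norm v"
    using v0 by (simp add: p inner_diff_right dot_square_norm power2_eq_square)
  also have "\<dots> \<le> norm v * norm w - lam * norm v"
    using norm_cauchy_schwarz[of v w] by simp
  also have "\<dots> \<le> 0" using assms mult_left_mono[OF assms(2) norm_ge_zero[of v]] by (simp add: mult.commute)
  finally show ?thesis using t0 by (simp add: vp mult_nonneg_nonpos)
qed

lemma clipII_in: "lam \<ge> 0 \<Longrightarrow> clip_II lam u \<in> SII lam"
  using row_proj_in by (simp add: SII_def clip_II_def)

lemma clipII_var:
  assumes "lam \<ge> 0" "w \<in> SII lam"
  shows "inner (u - clip_II lam u) (w - clip_II lam u) \<le> 0"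
proof -
  have "inner (u - clip_II lam u) (w - clip_II lam u)
     = (\<Sum>i\<in>UNIV. inner (u$i - (if u$i = 0 then 0 else (min (norm (u$i)) lam / norm (u$i)) *\<^sub>R u$i))
                          (w$i - (if u$i = 0 then 0 else (min (norm (u$i)) lam / norm (u$i)) *\<^sub>R u$i)))"
    by (simp add: inner_vec_def clip_II_def)
  also have "\<dots> \<le> 0"
    using assms by (intro sum_nonpos row_proj_var) (auto simp: SII_def)
  finally show ?thesis .
qed

lemma SII_support: "lam \<ge> 0 \<Longrightarrow> w \<in> SII lam \<Longrightarrow> inner V w \<le> lam * l21_norm V"
proof -
  assume "lam \<ge> 0" "w \<in> SII lam"
  then have "inner (V$i) (w$i) \<le> lam * norm (V$i)" for i
  proof -
    have "inner (V$i) (w$i) \<le> norm (V$i) * norm (w$i)" by (rule norm_cauchy_schwarz)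
    also have "\<dots> \<le> norm (V$i) * lam" using \<open>w \<in> SII lam\<close> by (intro mult_left_mono) (auto simp: SII_def)
    finally show ?thesis by (simp add: mult.commute)
  qed
  then have "inner V w \<le> (\<Sum>i\<in>UNIV. lam * norm (V$i))"
    unfolding inner_vec_def by (intro sum_mono) auto
  then show ?thesis by (simp add: l21_norm_def sum_distrib_left)
qed

lemma SII_attain: "lam \<ge> 0 \<Longrightarrow> \<exists>w\<in>SII lam. inner V w = lam * l21_norm V"
proof
  assume l: "lam \<ge> 0"
  let ?w = "\<chi> i. if V$i = 0 then 0 else (lam / norm (V$i)) *\<^sub>R V$i"
  show "?w \<in> SII lam" using l by (simp add: SII_def)
  have "inner (V$i) (?w$i) = lam * norm (V$i)" for i
    by (simp add: dot_square_norm power2_eq_square)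
  then show "inner V ?w = lam * l21_norm V"
    by (simp add: inner_vec_def l21_norm_def sum_distrib_left)
qed

lemma SII_convex: "convex (SII lam)"
  unfolding convex_def SII_def
proof (clarsimp)
  fix x y :: "real^'d^'m" and u v :: real and i
  assume h: "\<forall>i. norm (x$i) \<le> lam" "\<forall>i. norm (y$i) \<le> lam" "0 \<le> u" "0 \<le> v" "u + v = 1"
  have "norm (u *\<^sub>R x$i + v *\<^sub>R y$i) \<le> u * norm (x$i) + v * norm (y$i)"
    using h by (metis (no_types) abs_of_nonneg norm_scaleR norm_triangle_ineq)
  also have "\<dots> \<le> u * lam + v * lam" using h by (intro add_mono mult_left_mono) auto
  also have "\<dots> = (u + v) * lam" by (simp only: distrib_right)
  finally show "norm (u *\<^sub>R x$i + v *\<^sub>R y$i) \<le> lam" using h by simp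
qed

lemma SII_compact: "compact (SII lam :: (real^'d^'m) set)"
unfolding compact_eq_bounded_closed proof (intro conjI)
  show "bounded (SII lam :: (real^'d^'m) set)"
    unfolding bounded_iff
  proof (intro exI ballI)
    fix Z :: "real^'d^'m" assume "Z \<in> SII lam"
    then have "(norm (Z$i))^2 \<le> lam^2" for i
      by (simp add: SII_def) (meson norm_ge_zero order_trans power_mono)
    then have "(norm Z)^2 \<le> (\<Sum>i\<in>(UNIV::'m set). lam^2)"
      unfolding norm_sq_rows by (intro sum_mono) auto
    then show "norm Z \<le> sqrt (\<Sum>i\<in>(UNIV::'m set). lam^2)"
      by (simp add: real_le_rsqrt)
  qed
  have "SII lam = (\<Inter>i. {Z::real^'d^'m. norm (Z$i) \<le> lam})" by (auto simp: SII_def)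
  moreover have "closed (\<Inter>i. {Z::real^'d^'m. norm (Z$i) \<le> lam})"
    by (intro closed_INT ballI closed_Collect_le continuous_intros)
  ultimately show "closed (SII lam :: (real^'d^'m) set)" by (simp only:)
qed

lemma zero_SII: "lam \<ge> 0 \<Longrightarrow> 0 \<in> SII lam" by (simp add: SII_def)




lemma one_step_scalar:
  fixes Nf' Nu pu' Np' Np pp Nz' Nz zz gam bet s :: real
  assumes f': "Nf' = Nu - 2 * gam * pu' + gam^2 * Np'"
    and firm: "Nz' \<le> zz + bet * pu' - gam * bet * pp"
    and bnd: "Np' + Np - 2 * pp \<le> s * (Nz' + Nz - 2 * zz)"
    and sq: "Np' + Np + 2 * pp \<ge> 0"
    and dnn: "Nz' + Nz - 2 * zz \<ge> 0"
    and g: "gam > 0" and b: "bet > 0" and s: "s \<ge> 0" and c: "gam * bet * s \<le> 4/3"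
  shows "bet / gam * Nf' + Nz' - gam * bet / 2 * Np' \<le> bet / gam * Nu + Nz - gam * bet / 2 * Np"
proof -
  define lam where "lam = gam * bet"
  have lam0: "lam > 0" using g b by (simp add: lam_def)
  have e1: "bet / gam * Nf' = bet / gam * Nu - 2 * bet * pu' + lam * Np'"
    using g by (simp add: f' lam_def field_simps power2_eq_square)
  define Nd where "Nd = Nz' + Nz - 2 * zz"
  define Ndp where "Ndp = Np' + Np - 2 * pp"
  have h1: "lam * Ndp \<le> lam * (s * Nd)" using bnd lam0 by (simp add: Nd_def Ndp_def)
  have h2: "(lam * s) * Nd \<le> 4/3 * Nd" using c dnn by (intro mult_right_mono) (auto simp: lam_def Nd_def)
  have h3: "lam * (Np' + Np) \<ge> lam * (Ndp / 2)" using sq lam0 by (intro mult_left_mono) (auto simp: Ndp_def)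
  have "lam * (Np' + Np) / 2 - 2 * lam * pp = lam * Ndp - lam * (Np' + Np) / 2"
    by (simp add: Ndp_def algebra_simps)
  have key: "-Nd + lam * ((Np' + Np) / 2 - 2 * pp) \<le> 0"
  proof -
    have "lam * ((Np' + Np) / 2 - 2 * pp) = lam * Ndp - lam * (Np' + Np) / 2"
      by (simp add: Ndp_def algebra_simps)
    also have "\<dots> \<le> lam * Ndp - lam * (Ndp / 2) / 2" using h3 by linarith
    also have "\<dots> = 3/4 * (lam * Ndp)" by simp
    also have "\<dots> \<le> 3/4 * (lam * (s * Nd))" using h1 by linarith
    also have "\<dots> = 3/4 * ((lam * s) * Nd)" by (simp add: mult_ac)
    also have "\<dots> \<le> 3/4 * (4/3 * Nd)" using h2 by linarith
    finally show ?thesis by simp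
  qed
  have firm2: "2 * bet * pu' \<ge> 2 * Nz' - 2 * zz + 2 * lam * pp" using firm by (simp add: lam_def)
  have key2: "- Nd + (lam * Np') / 2 + (lam * Np) / 2 - 2 * (lam * pp) \<le> 0"
    using key by (simp add: algebra_simps)
  have fin: "bet / gam * Nf' + Nz' - (lam * Np') / 2 \<le> bet / gam * Nu + Nz - (lam * Np) / 2"
    using e1 key2 firm2 unfolding Nd_def by linarith
  show ?thesis using fin by (simp add: lam_def)
qed




lemma firm_nonexp:
  assumes Pin: "\<And>u. P u \<in> S"
    and Pvar: "\<And>u w. w \<in> S \<Longrightarrow> inner (u - P u) (w - P u) \<le> (0::real)"
  shows "(norm (P a - P b))^2 \<le> inner (P a - P b) (a - b)"
proof -
  have 1: "inner (a - P a) (P b - P a) \<le> 0" using Pvar Pin by blast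
  have 2: "inner (b - P b) (P a - P b) \<le> 0" using Pvar Pin by blast
  have "inner (a - P a) (P b - P a) + inner (b - P b) (P a - P b)
      = (norm (P a - P b))^2 - inner (P a - P b) (a - b)"
    by (simp add: power2_norm_eq_inner inner_diff_left inner_diff_right inner_commute algebra_simps)
  then show ?thesis using 1 2 by linarith
qed

lemma nonexp:
  assumes Pin: "\<And>u. P u \<in> S"
    and Pvar: "\<And>u w. w \<in> S \<Longrightarrow> inner (u - P u) (w - P u) \<le> (0::real)"
  shows "norm (P a - P b) \<le> norm (a - b)"
proof -
  have "(norm (P a - P b))^2 \<le> norm (P a - P b) * norm (a - b)"
    using firm_nonexp[of P S a b, OF Pin Pvar] norm_cauchy_schwarz[of "P a - P b" "a - b"] by linarith
  then show ?thesis
    by (metis mult_le_cancel_left norm_ge_zero power2_eq_square order_le_less not_le mult_zero_left)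
qed

lemma nonexp_cont:
  assumes "\<And>a b. norm (P a - P b) \<le> norm (a - b)"
  shows "continuous_on T P"
  unfolding continuous_on_iff
proof (intro ballI allI impI)
  fix x e assume "(e::real) > 0"
  then show "\<exists>d>0. \<forall>x'\<in>T. dist x' x < d \<longrightarrow> dist (P x') (P x) < e"
    using assms by (metis dist_norm le_less_trans)
qed

lemma trace_tmm: "trace (transpose (F::real^'d^'n) ** G) = inner F G"
proof -
  have "trace (transpose F ** G) = (\<Sum>i\<in>UNIV. \<Sum>k\<in>UNIV. F$k$i * G$k$i)"
    by (simp add: trace_def matrix_matrix_mult_def transpose_def)
  also have "\<dots> = (\<Sum>k\<in>UNIV. \<Sum>i\<in>UNIV. F$k$i * G$k$i)" by (rule sum.swap)
  also have "\<dots> = inner F G" by (simp add: inner_mat)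
  finally show ?thesis .
qed

lemma linear_mm: "linear (\<lambda>F::real^'d^'q. (M::real^'q^'p) ** F)"
  by (rule linearI) (simp_all add: matrix_add_ldistrib mm_scaleR_right)

lemma cont_mm [continuous_intros]:
  "continuous_on S g \<Longrightarrow> continuous_on S (\<lambda>x. (M::real^'q^'p) ** (g x :: real^'d^'q))"
  using continuous_on_compose2[OF linear_continuous_on[OF linear_conv_bounded_linear[THEN iffD1, OF linear_mm]], of S g UNIV]
  by simp

lemma cont_lin_comp:
  fixes f :: "'a::euclidean_space \<Rightarrow> 'b::euclidean_space"
  shows "linear f \<Longrightarrow> continuous_on S g \<Longrightarrow> continuous_on S (\<lambda>x. f (g x))"
  using continuous_on_compose2[OF linear_continuous_on[OF linear_conv_bounded_linear[THEN iffD1]], of f S g UNIV]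
  by simp




lemma contraction:
  fixes D :: "real^'n^'m" and h :: "real^'d^'n"
  assumes hBt: "\<And>Z::real^'d^'m. (norm (transpose D ** Z))^2 \<le> s * (norm Z)^2"
    and hB: "\<And>F::real^'d^'n. (norm (D ** F))^2 \<le> s * (norm F)^2"
    and s0: "s \<ge> 0" and g: "gam > 0" and l2: "lam2 \<ge> 0" and cg: "gam * (1 + lam2 * s) < 2"
  shows "(norm (h - gam *\<^sub>R (h + lam2 *\<^sub>R (transpose D ** (D ** h)))))^2
         \<le> (1 - gam * (2 - gam * (1 + lam2 * s))) * (norm h)^2"
proof -
  define q where "q = transpose D ** (D ** h)"
  define n where "n = (norm h)^2"
  define a where "a = (norm (D ** h))^2"
  define b where "b = (norm q)^2"
  have hq: "inner h q = a"
    using inner_mm_adjoint[of D h "D ** h"] by (simp add: q_def a_def power2_norm_eq_inner)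
  have "h - gam *\<^sub>R (h + lam2 *\<^sub>R q) = (1 - gam) *\<^sub>R h - (gam * lam2) *\<^sub>R q"
    by (simp add: algebra_simps)
  moreover have "(norm ((1 - gam) *\<^sub>R h - (gam * lam2) *\<^sub>R q))^2
      = (1 - gam)^2 * n - 2 * ((1 - gam) * (gam * lam2)) * a + (gam * lam2)^2 * b"
  proof -
    have nn: "n = inner h h" "b = inner q q" by (simp_all add: n_def b_def power2_norm_eq_inner)
    show ?thesis
      unfolding power2_norm_eq_inner nn inner_diff_left inner_diff_right inner_scaleR_left inner_scaleR_right
      using hq by (simp add: inner_commute[of q h] power2_eq_square algebra_simps)
  qed
  ultimately have e: "(norm (h - gam *\<^sub>R (h + lam2 *\<^sub>R q)))^2
      = (1 - gam)^2 * n - 2 * ((1 - gam) * (gam * lam2)) * a + (gam * lam2)^2 * b" by simp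
  have a_le: "a \<le> s * n" using hB[of h] by (simp add: a_def n_def)
  have b_le: "b \<le> s * a" using hBt[of "D ** h"] by (simp add: b_def a_def q_def)
  have a0: "a \<ge> 0" by (simp add: a_def)
  have h1: "gam * (s * n) \<ge> gam * a" using a_le g by simp
  have h2: "(gam * lam2) * b \<le> (gam * lam2) * (s * a)" using b_le g l2 by (intro mult_left_mono) auto
  have h3: "a * (2 - gam * (1 + lam2 * s)) \<ge> 0" using a0 cg by simp
  have br: "gam * (s * n) + 2 * (1 - gam) * a - (gam * lam2) * b \<ge> 0"
  proof -
    have "gam * (s * n) + 2 * (1 - gam) * a - (gam * lam2) * b
        \<ge> gam * a + 2 * (1 - gam) * a - (gam * lam2) * (s * a)" using h1 h2 by linarith
    also have "gam * a + 2 * (1 - gam) * a - (gam * lam2) * (s * a) = a * (2 - gam * (1 + lam2 * s))"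
      by (simp add: algebra_simps)
    finally show ?thesis using h3 by linarith
  qed
  have "(1 - gam * (2 - gam * (1 + lam2 * s))) * n
      - ((1 - gam)^2 * n - 2 * ((1 - gam) * (gam * lam2)) * a + (gam * lam2)^2 * b)
      = (gam * lam2) * (gam * (s * n) + 2 * (1 - gam) * a - (gam * lam2) * b)"
    by (simp add: algebra_simps power2_eq_square)
  also have "\<dots> \<ge> 0" using br g l2 by simp
  finally show ?thesis using e by (simp add: q_def n_def)
qed




lemma lyap_conv:
  fixes f :: "nat \<Rightarrow> 'a::real_normed_vector"
  assumes W0: "\<And>k. W k \<ge> (0::real)" and Wd: "\<And>k. W (Suc k) \<le> W k - c * (norm (f k))^2" and c: "c > 0"
  shows "f \<longlonglongrightarrow> 0"
proof -
  have ps: "c * (\<Sum>k<N. (norm (f k))^2) \<le> W 0 - W N" for N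
  proof (induction N)
    case (Suc N)
    then show ?case using Wd[of N] by (simp add: distrib_left)
  qed simp
  have "(\<Sum>k<N. (norm (f k))^2) \<le> W 0 / c" for N
    using ps[of N] W0[of N] c by (simp add: field_simps)
  then have "summable (\<lambda>k. (norm (f k))^2)"
    by (intro summableI_nonneg_bounded) auto
  then have "(\<lambda>k. (norm (f k))^2) \<longlonglongrightarrow> 0" by (rule summable_LIMSEQ_zero)
  then have "(\<lambda>k. sqrt ((norm (f k))^2)) \<longlonglongrightarrow> sqrt 0" by (rule tendsto_real_sqrt)
  then have "(\<lambda>k. norm (f k)) \<longlonglongrightarrow> 0" by simp
  then show ?thesis by (simp add: tendsto_norm_zero_iff)
qed




lemma core:
  fixes A :: "real^'n^'n" and D :: "real^'n^'m" and X :: "real^'d^'n"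
    and P :: "real^'d^'m \<Rightarrow> real^'d^'m" and S :: "(real^'d^'m) set" and G :: "real^'d^'m \<Rightarrow> real"
    and Fs :: "nat \<Rightarrow> real^'d^'n" and Zs :: "nat \<Rightarrow> real^'d^'m"
  assumes hL: "Ltilde A = transpose D ** D"
    and Sc: "compact S" and Sv: "convex S" and Sne: "S \<noteq> {}"
    and Pin: "\<And>u. P u \<in> S"
    and Pvar: "\<And>u w. w \<in> S \<Longrightarrow> inner (u - P u) (w - P u) \<le> 0"
    and hG: "\<And>V w. w \<in> S \<Longrightarrow> inner V w \<le> G V"
    and hGa: "\<And>V. \<exists>w\<in>S. G V \<le> inner V w"
    and s0: "s \<ge> 0"
    and hBt: "\<And>Z::real^'d^'m. (norm (transpose D ** Z))^2 \<le> s * (norm Z)^2"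
    and hB: "\<And>F::real^'d^'n. (norm (D ** F))^2 \<le> s * (norm F)^2"
    and g: "gam > 0" and b: "bet > 0" and l2: "lam2 \<ge> 0"
    and cg: "gam * (1 + lam2 * s) < 2" and cb: "gam * bet * s \<le> 4/3"
    and recZ: "\<And>k. Zs (Suc k) = P (Zs k + bet *\<^sub>R (D ** ((((1 - gam) *\<^sub>R mat 1 - (gam * lam2) *\<^sub>R Ltilde A) ** Fs k + gam *\<^sub>R X) - gam *\<^sub>R (transpose D ** Zs k))))"
    and recF: "\<And>k. Fs (Suc k) = (((1 - gam) *\<^sub>R mat 1 - (gam * lam2) *\<^sub>R Ltilde A) ** Fs k + gam *\<^sub>R X) - gam *\<^sub>R (transpose D ** Zs (Suc k))"
  shows "converges_to_opt Fs (\<lambda>F. G (D ** F) + smooth_part A X lam2 F)"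
proof -
  define Qf where "Qf F = F + lam2 *\<^sub>R (transpose D ** (D ** F))" for F :: "real^'d^'n"
  define Yf where "Yf F = (((1 - gam) *\<^sub>R mat 1 - (gam * lam2) *\<^sub>R Ltilde A) ** F + gam *\<^sub>R X)" for F
  have LF: "Ltilde A ** F = transpose D ** (D ** F)" for F :: "real^'d^'n"
    by (simp add: hL matrix_mul_assoc)
  have adjDD: "inner F (transpose D ** (D ** F)) = (norm (D ** F))^2" for F :: "real^'d^'n"
    using inner_mm_adjoint[of D F "D ** F"] by (simp add: power2_norm_eq_inner)
  have Mx: "((1 - gam) *\<^sub>R mat 1 - (gam * lam2) *\<^sub>R Ltilde A) ** F
      = (1 - gam) *\<^sub>R F - (gam * lam2) *\<^sub>R (Ltilde A ** F)" for F :: "real^'d^'n"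
    by (simp only: mm_diff_left mm_scaleR_left matrix_mul_lid)
  have Yf_eq: "Yf F = F - gam *\<^sub>R Qf F + gam *\<^sub>R X" for F
    unfolding Yf_def Mx by (simp add: Qf_def LF algebra_simps)
  have Qlin: "linear Qf"
    by (rule linearI) (simp_all add: Qf_def matrix_add_ldistrib mm_scaleR_right algebra_simps)
  have Qinner: "inner F (Qf F) = (norm F)^2 + lam2 * (norm (D ** F))^2" for F
    by (simp add: Qf_def inner_add_right adjDD power2_norm_eq_inner)
  have Qinj: "inj Qf"
    unfolding linear_injective_0[OF Qlin]
  proof (intro allI impI)
    fix x assume "Qf x = 0"
    then have "(norm x)^2 + lam2 * (norm (D ** x))^2 = 0" using Qinner[of x] by simp
    moreover have "lam2 * (norm (D ** x))^2 \<ge> 0" using l2 by simp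
    ultimately have "(norm x)^2 = 0" using zero_le_power2[of "norm x"] by linarith
    then show "x = 0" by simp
  qed
  obtain Qi where Qilin: "linear Qi" and QiQ: "\<And>x. Qi (Qf x) = x" and QQi: "\<And>x. Qf (Qi x) = x"
    using eucl.linear_injective_isomorphism[OF Qlin Qinj] by auto
  have Pne: "norm (P a - P c) \<le> norm (a - c)" for a c
    by (rule nonexp[of P S, OF Pin Pvar])
  have Pcont: "continuous_on UNIV P" by (rule nonexp_cont[OF Pne])
  define T where "T Z = P (Z + bet *\<^sub>R (D ** Qi (X - transpose D ** Z)))" for Z
  have ci: "continuous_on S (\<lambda>Z. Z + bet *\<^sub>R (D ** Qi (X - transpose D ** Z)))"
    by (intro continuous_intros cont_lin_comp[OF Qilin])
  have Tc: "continuous_on S T"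
    unfolding T_def using continuous_on_compose2[OF Pcont ci] by simp
  obtain Zo where ZoS: "Zo \<in> S" and TZo: "T Zo = Zo"
    using brouwer[OF Sc Sv Sne Tc] Pin unfolding T_def by blast
  define Fo where "Fo = Qi (X - transpose D ** Zo)"
  have QFo: "Qf Fo = X - transpose D ** Zo" by (simp add: Fo_def QQi)
  have PZo: "P (Zo + bet *\<^sub>R (D ** Fo)) = Zo" using TZo by (simp add: T_def Fo_def)
  have sp: "smooth_part A X lam2 F = lam2 / 2 * (norm (D ** F))^2 + 1/2 * (norm (F - X))^2" for F
    by (simp add: smooth_part_def matrix_mul_assoc[symmetric] trace_tmm LF adjDD)
  have GFo: "G (D ** Fo) \<le> inner (D ** Fo) Zo"
  proof -
    obtain w where wS: "w \<in> S" and Gw: "G (D ** Fo) \<le> inner (D ** Fo) w" using hGa by blast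
    have "inner ((Zo + bet *\<^sub>R (D ** Fo)) - Zo) (w - Zo) \<le> 0"
      using Pvar[OF wS, of "Zo + bet *\<^sub>R (D ** Fo)"] PZo by simp
    then have "bet * inner (D ** Fo) (w - Zo) \<le> 0" by simp
    then have "inner (D ** Fo) (w - Zo) \<le> 0" using b by (simp add: mult_le_0_iff)
    then show ?thesis using Gw by (simp add: inner_diff_right)
  qed
  define obj where "obj F = G (D ** F) + smooth_part A X lam2 F" for F
  have lower: "obj F \<ge> obj Fo + 1/2 * (norm (F - Fo))^2" for F
  proof -
    define h where "h = F - Fo"
    have DF: "D ** F = D ** Fo + D ** h" by (simp add: h_def mm_diff_right)
    have FX: "F - X = (Fo - X) + h" by (simp add: h_def)
    have n1: "(norm (D ** F))^2 = (norm (D ** Fo))^2 + 2 * inner (D ** Fo) (D ** h) + (norm (D ** h))^2"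
      unfolding DF power2_norm_eq_inner by (simp add: inner_add_left inner_add_right inner_commute)
    have n2: "(norm (F - X))^2 = (norm (Fo - X))^2 + 2 * inner (Fo - X) h + (norm h)^2"
      unfolding FX power2_norm_eq_inner by (simp add: inner_add_left inner_add_right inner_commute)
    have i1: "inner (D ** Fo) (D ** h) = inner h (transpose D ** (D ** Fo))"
      using inner_mm_adjoint[of D h "D ** Fo"] by (simp add: inner_commute)
    have "Fo - X + lam2 *\<^sub>R (transpose D ** (D ** Fo)) = - (transpose D ** Zo)"
      using QFo by (simp add: Qf_def algebra_simps)
    then have "inner h (Fo - X) + lam2 * inner h (transpose D ** (D ** Fo)) = - inner h (transpose D ** Zo)"
      by (metis inner_add_right inner_minus_right inner_scaleR_right)
    also have "inner h (transpose D ** Zo) = inner (D ** h) Zo" by (simp add: inner_mm_adjoint)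
    finally have cross: "inner (Fo - X) h + lam2 * inner (D ** Fo) (D ** h) = - inner (D ** h) Zo"
      by (simp add: i1 inner_commute)
    have GF: "G (D ** F) \<ge> G (D ** Fo) + inner (D ** h) Zo"
      using hG[OF ZoS, of "D ** F"] GFo by (simp add: DF inner_add_left)
    have "lam2 * (norm (D ** h))^2 \<ge> 0" using l2 by simp
    then show ?thesis
      unfolding obj_def sp n1 n2 h_def[symmetric] using GF cross
      by (simp add: algebra_simps)
  qed
  have exmin: "\<exists>Fm. \<forall>F. obj Fm \<le> obj F"
  proof
    show "\<forall>F. obj Fo \<le> obj F"
    proof
      fix F
      have "0 \<le> 1/2 * (norm (F - Fo))^2" by simp
      then show "obj Fo \<le> obj F" using lower[of F] by linarith
    qed
  qed
  have uniq: "Fm = Fo" if "\<forall>F. obj Fm \<le> obj F" for Fm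
  proof -
    have "obj Fm \<le> obj Fo" using that by blast
    then have "1/2 * (norm (Fm - Fo))^2 \<le> 0" using lower[of Fm] by linarith
    then show ?thesis by simp
  qed
  have Fofix: "Yf Fo - gam *\<^sub>R (transpose D ** Zo) = Fo"
    by (simp add: Yf_eq QFo algebra_simps)
  have Qdiff: "Qf F - Qf Fo = Qf (F - Fo)" for F using linear_diff[OF Qlin] by simp
  define f where "f k = Fs k - Fo" for k
  define z where "z k = Zs k - Zo" for k
  define u where "u k = f k - gam *\<^sub>R Qf (f k)" for k
  have Ydiff: "Yf (Fs k) - Yf Fo = u k" for k
    by (simp add: Yf_eq u_def f_def Qdiff[symmetric] algebra_simps)
  have fS: "f (Suc k) = u k - gam *\<^sub>R (transpose D ** z (Suc k))" for k
  proof -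
    have "f (Suc k) = (Yf (Fs k) - gam *\<^sub>R (transpose D ** Zs (Suc k))) - (Yf Fo - gam *\<^sub>R (transpose D ** Zo))"
      using recF[of k] Fofix by (simp add: f_def Yf_def)
    also have "\<dots> = (Yf (Fs k) - Yf Fo) - gam *\<^sub>R (transpose D ** (Zs (Suc k) - Zo))"
      by (simp add: mm_diff_right algebra_simps)
    finally show ?thesis by (simp add: Ydiff z_def)
  qed
  have firm: "(norm (z (Suc k)))^2 \<le> inner (z (Suc k)) (z k + bet *\<^sub>R (D ** (u k - gam *\<^sub>R (transpose D ** z k))))" for k
  proof -
    define ak where "ak = Zs k + bet *\<^sub>R (D ** (Yf (Fs k) - gam *\<^sub>R (transpose D ** Zs k)))"
    define ao where "ao = Zo + bet *\<^sub>R (D ** (Yf Fo - gam *\<^sub>R (transpose D ** Zo)))"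
    have Pk: "P ak = Zs (Suc k)" using recZ[of k] by (simp add: ak_def Yf_def)
    have Po: "P ao = Zo" using PZo by (simp add: ao_def Fofix)
    have V: "(Yf (Fs k) - gam *\<^sub>R (transpose D ** Zs k)) - (Yf Fo - gam *\<^sub>R (transpose D ** Zo))
        = u k - gam *\<^sub>R (transpose D ** z k)"
      by (simp add: Ydiff[symmetric] z_def mm_diff_right algebra_simps)
    have "ak - ao = z k + bet *\<^sub>R (D ** (Yf (Fs k) - gam *\<^sub>R (transpose D ** Zs k))
                      - D ** (Yf Fo - gam *\<^sub>R (transpose D ** Zo)))"
      by (simp add: ak_def ao_def z_def algebra_simps)
    also have "\<dots> = z k + bet *\<^sub>R (D ** ((Yf (Fs k) - gam *\<^sub>R (transpose D ** Zs k))
                      - (Yf Fo - gam *\<^sub>R (transpose D ** Zo))))"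
      by (simp only: mm_diff_right)
    finally have "ak - ao = z k + bet *\<^sub>R (D ** (u k - gam *\<^sub>R (transpose D ** z k)))"
      by (simp only: V)
    moreover have "(norm (P ak - P ao))^2 \<le> inner (P ak - P ao) (ak - ao)"
      by (rule firm_nonexp[of P S, OF Pin Pvar])
    ultimately show ?thesis using Pk Po by (simp add: z_def)
  qed
  define W where "W k = bet / gam * (norm (f k))^2 + (norm (z k))^2 - gam * bet / 2 * (norm (transpose D ** z k))^2" for k
  have Wnn: "W k \<ge> 0" for k
  proof -
    have "gam * bet / 2 * (norm (transpose D ** z k))^2 \<le> gam * bet / 2 * (s * (norm (z k))^2)"
      using hBt[of "z k"] g b by (intro mult_left_mono) auto
    also have "\<dots> = (gam * bet * s) / 2 * (norm (z k))^2" by simp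
    also have "\<dots> \<le> (4/3) / 2 * (norm (z k))^2" using cb by (intro mult_right_mono) auto
    finally have "gam * bet / 2 * (norm (transpose D ** z k))^2 \<le> (norm (z k))^2"
      using zero_le_power2[of "norm (z k)"] by linarith
    moreover have "bet / gam * (norm (f k))^2 \<ge> 0" using g b by simp
    ultimately show ?thesis unfolding W_def by linarith
  qed
  define c where "c = gam * (2 - gam * (1 + lam2 * s))"
  have c0: "c > 0" using g cg by (simp add: c_def)
  have contr: "(norm (u k))^2 \<le> (1 - c) * (norm (f k))^2" for k
    unfolding u_def Qf_def c_def by (rule contraction[OF hBt hB s0 g l2 cg])
  have step: "W (Suc k) \<le> W k - bet / gam * c * (norm (f k))^2" for k
  proof -
    let ?z' = "z (Suc k)" and ?z = "z k" and ?u = "u k"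
    let ?p' = "transpose D ** ?z'" and ?p = "transpose D ** ?z"
    have e1: "(norm (f (Suc k)))^2 = (norm ?u)^2 - 2 * gam * inner ?p' ?u + gam^2 * (norm ?p')^2"
      unfolding fS power2_norm_eq_inner
      by (simp add: inner_diff_left inner_diff_right inner_commute power2_eq_square algebra_simps)
    have "inner ?z' (?z + bet *\<^sub>R (D ** (?u - gam *\<^sub>R ?p)))
        = inner ?z' ?z + bet * inner (?u - gam *\<^sub>R ?p) ?p'"
      using inner_mm_adjoint[of D "?u - gam *\<^sub>R ?p" ?z'] by (simp add: inner_add_right inner_commute)
    also have "\<dots> = inner ?z' ?z + bet * inner ?p' ?u - gam * bet * inner ?p' ?p"
      by (simp add: inner_diff_left inner_commute algebra_simps)
    finally have e2: "(norm ?z')^2 \<le> inner ?z' ?z + bet * inner ?p' ?u - gam * bet * inner ?p' ?p"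
      using firm[of k] by simp
    have e3: "(norm ?p')^2 + (norm ?p)^2 - 2 * inner ?p' ?p \<le> s * ((norm ?z')^2 + (norm ?z)^2 - 2 * inner ?z' ?z)"
    proof -
      have "(norm ?p')^2 + (norm ?p)^2 - 2 * inner ?p' ?p = (norm (?p' - ?p))^2"
        unfolding power2_norm_eq_inner by (simp add: inner_diff_left inner_diff_right inner_commute)
      also have "?p' - ?p = transpose D ** (?z' - ?z)" by (simp add: mm_diff_right)
      also have "(norm (transpose D ** (?z' - ?z)))^2 \<le> s * (norm (?z' - ?z))^2" by (rule hBt)
      also have "(norm (?z' - ?z))^2 = (norm ?z')^2 + (norm ?z)^2 - 2 * inner ?z' ?z"
        unfolding power2_norm_eq_inner by (simp add: inner_diff_left inner_diff_right inner_commute)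
      finally show ?thesis .
    qed
    have e4: "(norm ?p')^2 + (norm ?p)^2 + 2 * inner ?p' ?p \<ge> 0"
    proof -
      have "(norm ?p')^2 + (norm ?p)^2 + 2 * inner ?p' ?p = (norm (?p' + ?p))^2"
        unfolding power2_norm_eq_inner by (simp add: inner_add_left inner_add_right inner_commute)
      then show ?thesis by simp
    qed
    have e5: "(norm ?z')^2 + (norm ?z)^2 - 2 * inner ?z' ?z \<ge> 0"
    proof -
      have "(norm ?z')^2 + (norm ?z)^2 - 2 * inner ?z' ?z = (norm (?z' - ?z))^2"
        unfolding power2_norm_eq_inner by (simp add: inner_diff_left inner_diff_right inner_commute)
      then show ?thesis by simp
    qed
    have os: "bet / gam * (norm (f (Suc k)))^2 + (norm ?z')^2 - gam * bet / 2 * (norm ?p')^2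
        \<le> bet / gam * (norm ?u)^2 + (norm ?z)^2 - gam * bet / 2 * (norm ?p)^2"
      by (rule one_step_scalar[OF e1 e2 e3 e4 e5 g b s0 cb])
    have "bet / gam * (norm ?u)^2 \<le> bet / gam * ((1 - c) * (norm (f k))^2)"
      using contr[of k] g b by (intro mult_left_mono) auto
    then show ?thesis using os unfolding W_def by (simp add: algebra_simps)
  qed
  have fconv: "f \<longlonglongrightarrow> 0"
    by (rule lyap_conv[of W, OF Wnn step]) (use c0 g b in simp)
  have "(\<lambda>k. f k + Fo) \<longlonglongrightarrow> 0 + Fo" by (intro tendsto_add fconv tendsto_const)
  then have Fconv: "Fs \<longlonglongrightarrow> Fo" by (simp add: f_def)
  have objeq: "(\<lambda>F. G (D ** F) + smooth_part A X lam2 F) = obj" by (simp add: obj_def[abs_def])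
  show ?thesis
    unfolding converges_to_opt_def objeq using exmin uniq Fconv by blast
qed




lemma emp_rec:
  fixes P :: "real^'d^'m \<Rightarrow> real^'d^'m" and A :: "real^'n^'n" and Delta :: "real^'n^'m"
  defines "Dt \<equiv> Deltatilde A Delta"
  shows "snd (emp P A Delta Xin lam2 gam bet (Suc k)) = P (snd (emp P A Delta Xin lam2 gam bet k) + bet *\<^sub>R (Dt ** ((((1 - gam) *\<^sub>R mat 1 - (gam * lam2) *\<^sub>R Ltilde A) ** fst (emp P A Delta Xin lam2 gam bet k) + gam *\<^sub>R Xin) - gam *\<^sub>R (transpose Dt ** snd (emp P A Delta Xin lam2 gam bet k)))))"
    and "fst (emp P A Delta Xin lam2 gam bet (Suc k)) = (((1 - gam) *\<^sub>R mat 1 - (gam * lam2) *\<^sub>R Ltilde A) ** fst (emp P A Delta Xin lam2 gam bet k) + gam *\<^sub>R Xin) - gam *\<^sub>R (transpose Dt ** snd (emp P A Delta Xin lam2 gam bet (Suc k)))"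
  by (simp_all add: Dt_def Let_def split_beta)

lemma conv_both:
  fixes A :: "real^'n^'n" and Delta :: "real^'n^'m" and Xin :: "real^'d^'n"
  assumes u: "undirected_adj A" and oi: "oriented_incidence A Delta"
    and l1: "lam1 \<ge> 0" and l2: "lam2 \<ge> 0" and s0: "s \<ge> 0"
    and hBt: "\<And>Z::real^'d^'m. (norm (transpose (Deltatilde A Delta) ** Z))^2 \<le> s * (norm Z)^2"
    and hB: "\<And>F::real^'d^'n. (norm (Deltatilde A Delta ** F))^2 \<le> s * (norm F)^2"
    and g: "gam > 0" and b: "bet > 0"
    and cg: "gam * (1 + lam2 * s) < 2" and cb: "gam * bet * s \<le> 4/3"
  shows "converges_to_opt (\<lambda>k. fst (emp (clip_I lam1) A Delta Xin lam2 gam bet k)) (obj_I A Delta Xin lam1 lam2)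
       \<and> converges_to_opt (\<lambda>k. fst (emp (clip_II lam1) A Delta Xin lam2 gam bet k)) (obj_II A Delta Xin lam1 lam2)"
proof
  have hL: "Ltilde A = transpose (Deltatilde A Delta) ** Deltatilde A Delta" by (rule Ltilde_gram[OF u oi])
  have o1: "obj_I A Delta Xin lam1 lam2 = (\<lambda>F. (\<lambda>V. lam1 * l1_norm V) (Deltatilde A Delta ** F) + smooth_part A Xin lam2 F)"
    by (simp add: obj_I_def[abs_def])
  show "converges_to_opt (\<lambda>k. fst (emp (clip_I lam1) A Delta Xin lam2 gam bet k)) (obj_I A Delta Xin lam1 lam2)"
    unfolding o1
  proof (rule core[OF hL SI_compact SI_convex _ _ _ _ _ s0 hBt hB g b l2 cg cb])
    show "SI lam1 \<noteq> {}" using zero_SI[OF l1] by blast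
    show "\<And>u. clip_I lam1 u \<in> SI lam1" using clipI_in[OF l1] .
    show "\<And>u w. w \<in> SI lam1 \<Longrightarrow> inner (u - clip_I lam1 u) (w - clip_I lam1 u) \<le> 0"
      using clipI_var[OF l1] .
    show "\<And>V w. w \<in> SI lam1 \<Longrightarrow> inner V w \<le> lam1 * l1_norm V" using SI_support[OF l1] .
    show "\<And>V. \<exists>w\<in>SI lam1. lam1 * l1_norm V \<le> inner V w" by (metis SI_attain[OF l1] order_refl)
  qed (rule emp_rec)+
  have o2: "obj_II A Delta Xin lam1 lam2 = (\<lambda>F. (\<lambda>V. lam1 * l21_norm V) (Deltatilde A Delta ** F) + smooth_part A Xin lam2 F)"
    by (simp add: obj_II_def[abs_def])
  show "converges_to_opt (\<lambda>k. fst (emp (clip_II lam1) A Delta Xin lam2 gam bet k)) (obj_II A Delta Xin lam1 lam2)"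
    unfolding o2
  proof (rule core[OF hL SII_compact SII_convex _ _ _ _ _ s0 hBt hB g b l2 cg cb])
    show "SII lam1 \<noteq> {}" using zero_SII[OF l1] by blast
    show "\<And>u. clip_II lam1 u \<in> SII lam1" using clipII_in[OF l1] .
    show "\<And>u w. w \<in> SII lam1 \<Longrightarrow> inner (u - clip_II lam1 u) (w - clip_II lam1 u) \<le> 0"
      using clipII_var[OF l1] .
    show "\<And>V w. w \<in> SII lam1 \<Longrightarrow> inner V w \<le> lam1 * l21_norm V" using SII_support[OF l1] .
    show "\<And>V. \<exists>w\<in>SII lam1. lam1 * l21_norm V \<le> inner V w" by (metis SII_attain[OF l1] order_refl)
  qed (rule emp_rec)+
qed




theorem theorem1:
  fixes A :: "real^'n^'n" and Delta :: "real^'n^'m" and Xin :: "real^'d^'n"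
    and lam1 lam2 :: real
  assumes "undirected_adj A"
    and "oriented_incidence A Delta"
    and "lam1 \<ge> 0" and "lam2 \<ge> 0"
  shows
    "(\<forall>gam bet. gam > 0 \<and> bet > 0 \<and> gam < 2 / (1 + lam2 * spec_norm (Ltilde A))
        \<and> bet \<le> 4 / (3 * gam * spec_norm (Deltatilde A Delta ** transpose (Deltatilde A Delta))) \<longrightarrow>
        converges_to_opt (\<lambda>k. fst (emp (clip_I lam1) A Delta Xin lam2 gam bet k)) (obj_I A Delta Xin lam1 lam2)
      \<and> converges_to_opt (\<lambda>k. fst (emp (clip_II lam1) A Delta Xin lam2 gam bet k)) (obj_II A Delta Xin lam1 lam2))
   \<and> spec_norm (Ltilde A) = spec_norm (transpose (Deltatilde A Delta) ** Deltatilde A Delta)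
   \<and> spec_norm (transpose (Deltatilde A Delta) ** Deltatilde A Delta)
       = spec_norm (Deltatilde A Delta ** transpose (Deltatilde A Delta))
   \<and> spec_norm (Deltatilde A Delta ** transpose (Deltatilde A Delta)) \<le> 2
   \<and> (\<forall>gam bet. gam > 0 \<and> bet > 0 \<and> gam < 2 / (1 + 2 * lam2) \<and> bet \<le> 2 / (3 * gam) \<longrightarrow>
        converges_to_opt (\<lambda>k. fst (emp (clip_I lam1) A Delta Xin lam2 gam bet k)) (obj_I A Delta Xin lam1 lam2)
      \<and> converges_to_opt (\<lambda>k. fst (emp (clip_II lam1) A Delta Xin lam2 gam bet k)) (obj_II A Delta Xin lam1 lam2))"
proof -
  note u = assms(1) and oi = assms(2) and l1 = assms(3) and l2 = assms(4)
  define Dt where "Dt = Deltatilde A Delta"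
  define \<sigma> where "\<sigma> = (spec_norm Dt)^2"
  have s0: "\<sigma> \<ge> 0" by (simp add: \<sigma>_def)
  have eL: "spec_norm (Ltilde A) = spec_norm (transpose Dt ** Dt)"
    by (simp add: Ltilde_gram[OF u oi] Dt_def)
  have e2: "spec_norm (transpose Dt ** Dt) = \<sigma>" by (simp add: spec_tM_M \<sigma>_def)
  have e3: "spec_norm (Dt ** transpose Dt) = \<sigma>" by (simp add: spec_M_tM \<sigma>_def)
  have le2: "\<sigma> \<le> 2" using spec_Dt_le2[OF u oi] by (simp add: \<sigma>_def Dt_def)
  have hBt: "(norm (transpose Dt ** Z))^2 \<le> \<sigma> * (norm Z)^2" for Z :: "real^'d^'m"
    using norm_tmm_sq[of Dt Z] by (simp add: \<sigma>_def)
  have hB: "(norm (Dt ** F))^2 \<le> \<sigma> * (norm F)^2" for F :: "real^'d^'n"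
    using norm_mm_sq[of Dt F] by (simp add: \<sigma>_def)
  have hBt2: "(norm (transpose Dt ** Z))^2 \<le> 2 * (norm Z)^2" for Z :: "real^'d^'m"
    using hBt[of Z] le2 mult_right_mono[OF le2 zero_le_power2[of "norm Z"]] by linarith
  have hB2: "(norm (Dt ** F))^2 \<le> 2 * (norm F)^2" for F :: "real^'d^'n"
    using hB[of F] le2 mult_right_mono[OF le2 zero_le_power2[of "norm F"]] by linarith
  have part1: "converges_to_opt (\<lambda>k. fst (emp (clip_I lam1) A Delta Xin lam2 gam bet k)) (obj_I A Delta Xin lam1 lam2)
      \<and> converges_to_opt (\<lambda>k. fst (emp (clip_II lam1) A Delta Xin lam2 gam bet k)) (obj_II A Delta Xin lam1 lam2)"
    if g: "gam > 0" and b: "bet > 0" and cg0: "gam < 2 / (1 + lam2 * \<sigma>)" and cb0: "bet \<le> 4 / (3 * gam * \<sigma>)"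
    for gam bet
  proof -
    have "\<sigma> \<noteq> 0" using cb0 b by auto
    then have sp: "\<sigma> > 0" using s0 by simp
    have "1 + lam2 * \<sigma> > 0" using l2 s0 by (simp add: add_pos_nonneg)
    then have cg: "gam * (1 + lam2 * \<sigma>) < 2" using cg0 by (simp add: less_divide_eq)
    have "3 * gam * \<sigma> > 0" using g sp by simp
    then have "bet * (3 * gam * \<sigma>) \<le> 4" using cb0 by (simp add: le_divide_eq)
    then have cb: "gam * bet * \<sigma> \<le> 4/3" by (simp add: algebra_simps)
    show ?thesis
      by (rule conv_both[OF u oi l1 l2 s0 hBt[unfolded Dt_def] hB[unfolded Dt_def] g b cg cb])
  qed
  have part2: "converges_to_opt (\<lambda>k. fst (emp (clip_I lam1) A Delta Xin lam2 gam bet k)) (obj_I A Delta Xin lam1 lam2)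
      \<and> converges_to_opt (\<lambda>k. fst (emp (clip_II lam1) A Delta Xin lam2 gam bet k)) (obj_II A Delta Xin lam1 lam2)"
    if g: "gam > 0" and b: "bet > 0" and cg0: "gam < 2 / (1 + 2 * lam2)" and cb0: "bet \<le> 2 / (3 * gam)"
    for gam bet
  proof -
    have "1 + 2 * lam2 > 0" using l2 by simp
    then have cg: "gam * (1 + lam2 * 2) < 2" using cg0 by (simp add: less_divide_eq mult.commute)
    have "3 * gam > 0" using g by simp
    then have "bet * (3 * gam) \<le> 2" using cb0 by (simp add: le_divide_eq)
    then have cb: "gam * bet * 2 \<le> 4/3" by (simp add: algebra_simps)
    show ?thesis
      by (rule conv_both[OF u oi l1 l2 _ hBt2[unfolded Dt_def] hB2[unfolded Dt_def] g b cg cb]) simp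
  qed
  show ?thesis
    using part1 part2 eL e2 e3 le2 unfolding Dt_def by auto
qed


end
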